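(* In the weighted kidney exchange game (W-KEG), even assuming players cannot hide vertices, a player can have a strict incentive to misreport her weights: there exists a W-KEG instance in which some player $p$ strictly increases her true utility by reporting a different (larger) weight $w^p_{vu}$ for some external edge $(v,u)$ with $v\in V^p$, the independent agent then computing its maximum-weight matching with the reported weights.
   Context: W-KEG: players $N=\{1,\dots,n\}$; player $p$ has internal graph $G^p=(V^p,E^p)$ (pairwise disjoint vertex sets); $E^I$ is a set of external edges each joining vertices of two different players; $E^I_p$ is the set of external edges incident to $V^p$. Each player $p$ has nonnegative weights $w^p_e$ on $E^p\cup E^I_p$. A strategy of player $p$ is a matching $M^p$ of $G^p$. The independent agent selects a maximum-weight matching $M^I$ of the external edges whose endpoints are uncovered by $\bigcup_pM^p$, where an external edge $(v,u)$ with $v\in V^i$, $u\in V^j$ has weight $w^I_{vu}=w^i_{vu}+w^j_{vu}$ computed from the players' reported weights. With $M^I_p$ the edges of $M^I$ incident to $V^p$, player $p$'s (true) utility is $\sum_{e\in M^p}w^p_e+\sum_{e\in M^I_p}w^p_e$ with her true weights. *)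

theory Defs
  imports Complex_Main
begin

text \<open>Vertices are natural numbers, edges are
  two-element vertex sets.  Players are 1..n; player p owns vertex set V p, internal edge set
  E p; EI is the set of external edges; w p e is player p's (true or reported) weight of e.\<close>

definition matching :: "'v set set \<Rightarrow> bool" where
  "matching M \<longleftrightarrow> (\<forall>e\<in>M. \<forall>f\<in>M. e \<noteq> f \<longrightarrow> e \<inter> f = {})"

definition ext_edges_of :: "(nat \<Rightarrow> 'v set) \<Rightarrow> 'v set set \<Rightarrow> nat \<Rightarrow> 'v set set" where
  "ext_edges_of V EI p = {e \<in> EI. e \<inter> V p \<noteq> {}}"

definition wkeg :: "nat \<Rightarrow> (nat \<Rightarrow> 'v set) \<Rightarrow> (nat \<Rightarrow> 'v set set) \<Rightarrow> 'v set set
    \<Rightarrow> (nat \<Rightarrow> 'v set \<Rightarrow> real) \<Rightarrow> bool" where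
  "wkeg n V E EI w \<longleftrightarrow>
     (\<forall>p\<in>{1..n}. finite (V p)) \<and>
     (\<forall>p\<in>{1..n}. \<forall>q\<in>{1..n}. p \<noteq> q \<longrightarrow> V p \<inter> V q = {}) \<and>
     (\<forall>p\<in>{1..n}. \<forall>e\<in>E p. \<exists>a b. e = {a, b} \<and> a \<noteq> b \<and> a \<in> V p \<and> b \<in> V p) \<and>
     finite EI \<and>
     (\<forall>e\<in>EI. \<exists>a b i j. e = {a, b} \<and> i \<in> {1..n} \<and> j \<in> {1..n} \<and> i \<noteq> j
                          \<and> a \<in> V i \<and> b \<in> V j) \<and>
     (\<forall>p\<in>{1..n}. \<forall>e\<in>E p \<union> ext_edges_of V EI p. 0 \<le> w p e)"

definition strategy_profile :: "nat \<Rightarrow> (nat \<Rightarrow> 'v set set) \<Rightarrow> (nat \<Rightarrow> 'v set set) \<Rightarrow> bool" where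
  "strategy_profile n E M \<longleftrightarrow> (\<forall>p\<in>{1..n}. M p \<subseteq> E p \<and> matching (M p))"

definition available :: "nat \<Rightarrow> 'v set set \<Rightarrow> (nat \<Rightarrow> 'v set set) \<Rightarrow> 'v set set" where
  "available n EI M = {e \<in> EI. \<forall>p\<in>{1..n}. e \<inter> \<Union>(M p) = {}}"

text \<open>Weight used by the independent agent: w^I_{vu} = w^i_{vu} + w^j_{vu}.\<close>
definition agent_weight :: "nat \<Rightarrow> (nat \<Rightarrow> 'v set) \<Rightarrow> (nat \<Rightarrow> 'v set \<Rightarrow> real) \<Rightarrow> 'v set \<Rightarrow> real" where
  "agent_weight n V w e = (\<Sum>p\<in>{1..n}. if e \<inter> V p \<noteq> {} then w p e else 0)"

definition agent_choice :: "nat \<Rightarrow> (nat \<Rightarrow> 'v set) \<Rightarrow> 'v set set \<Rightarrow> (nat \<Rightarrow> 'v set set)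
    \<Rightarrow> (nat \<Rightarrow> 'v set \<Rightarrow> real) \<Rightarrow> 'v set set \<Rightarrow> bool" where
  "agent_choice n V EI M w MI \<longleftrightarrow>
     MI \<subseteq> available n EI M \<and> matching MI \<and>
     (\<forall>M'. M' \<subseteq> available n EI M \<and> matching M' \<longrightarrow>
        (\<Sum>e\<in>M'. agent_weight n V w e) \<le> (\<Sum>e\<in>MI. agent_weight n V w e))"

text \<open>Utility of player p (computed with weights w, meant to be her true weights).\<close>
definition utility :: "(nat \<Rightarrow> 'v set) \<Rightarrow> (nat \<Rightarrow> 'v set \<Rightarrow> real) \<Rightarrow> nat
    \<Rightarrow> (nat \<Rightarrow> 'v set set) \<Rightarrow> 'v set set \<Rightarrow> real" where
  "utility V w p M MI = (\<Sum>e\<in>M p. w p e) + (\<Sum>e\<in>{e\<in>MI. e \<inter> V p \<noteq> {}}. w p e)"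

end

theory Submission
  imports Defs
begin

definition wx :: "nat \<Rightarrow> nat set \<Rightarrow> real" where
  "wx p e = (if p = 1 \<and> e = {1,2} then 1 else if p = 2 \<and> e = {1,3} then 2 else 0)"

definition Vx :: "nat \<Rightarrow> nat set" where
  "Vx p = (if p = 1 then {1} else if p = 2 then {2,3} else {})"

lemma sub2: "MI \<subseteq> {a,b} \<Longrightarrow> MI = {} \<or> MI = {a} \<or> MI = {b} \<or> MI = {a,b}"
  by blast

lemma notmatch: "\<not> matching {{1,2},{1::nat,3}}"
  unfolding matching_def by auto

lemma avail: "available 2 {{1,2},{1::nat,3}} (\<lambda>_. {}) = {{1,2},{1,3}}"
  unfolding available_def by auto

lemma m1: "matching {e}" unfolding matching_def by auto

lemma aw: "agent_weight 2 Vx w e = (if e \<inter> Vx 1 \<noteq> {} then w 1 e else 0) + (if e \<inter> Vx 2 \<noteq> {} then w 2 e else 0)"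
  unfolding agent_weight_def by (simp add: numeral_2_eq_2)

lemma choice_cases:
  assumes "agent_choice 2 Vx {{1,2},{1,3}} (\<lambda>_. {}) w MI"
  shows "MI = {} \<or> MI = {{1,2}} \<or> MI = {{1,3}}"
    and "agent_weight 2 Vx w {1,3} \<le> (\<Sum>e\<in>MI. agent_weight 2 Vx w e)"
    and "agent_weight 2 Vx w {1,2} \<le> (\<Sum>e\<in>MI. agent_weight 2 Vx w e)"
proof -
  have s: "MI \<subseteq> {{1,2},{1,3}}" "matching MI" using assms avail unfolding agent_choice_def by auto
  have "{{1::nat,2}} \<noteq> {{1,3}}" by (auto simp: doubleton_eq_iff)
  then show "MI = {} \<or> MI = {{1,2}} \<or> MI = {{1,3}}" using sub2[OF s(1)] s(2) notmatch by auto
  show "agent_weight 2 Vx w {1,3} \<le> (\<Sum>e\<in>MI. agent_weight 2 Vx w e)"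
  proof -
    have "{{1::nat,3}} \<subseteq> available 2 {{1,2},{1,3}} (\<lambda>_. {})" using avail by auto
    then have "(\<Sum>e\<in>{{1,3}}. agent_weight 2 Vx w e) \<le> (\<Sum>e\<in>MI. agent_weight 2 Vx w e)"
      using assms m1[of "{1,3}"] unfolding agent_choice_def by blast
    then show ?thesis by simp
  qed
  show "agent_weight 2 Vx w {1,2} \<le> (\<Sum>e\<in>MI. agent_weight 2 Vx w e)"
  proof -
    have "{{1::nat,2}} \<subseteq> available 2 {{1,2},{1,3}} (\<lambda>_. {})" using avail by auto
    then have "(\<Sum>e\<in>{{1,2}}. agent_weight 2 Vx w e) \<le> (\<Sum>e\<in>MI. agent_weight 2 Vx w e)"
      using assms m1[of "{1,2}"] unfolding agent_choice_def by blast
    then show ?thesis by simp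
  qed
qed

theorem lemma3:
  shows "\<exists>(n::nat) (V::nat \<Rightarrow> nat set) E EI (w::nat \<Rightarrow> nat set \<Rightarrow> real) M p v u x.
           wkeg n V E EI w \<and> strategy_profile n E M \<and> p \<in> {1..n} \<and>
           {v, u} \<in> EI \<and> v \<in> V p \<and> x > w p {v, u} \<and>
           (\<forall>MI MI'. agent_choice n V EI M w MI \<longrightarrow>
                     agent_choice n V EI M (w(p := (w p)({v, u} := x))) MI' \<longrightarrow>
                     utility V w p M MI < utility V w p M MI')"
proof (intro exI conjI allI impI)
  have d: "{1::nat,2} \<noteq> {1,3}" by (auto simp: doubleton_eq_iff)
  show "wkeg 2 Vx (\<lambda>_. {}) {{1,2},{1,3}} wx"
    unfolding wkeg_def Vx_def wx_def
    apply (intro conjI)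
    apply (auto simp: numeral_2_eq_2)
    apply (metis insertCI le_SucE le_zero_eq n_not_Suc_n)
    by (metis One_nat_def Suc_1 insertCI numeral_2_eq_2 n_not_Suc_n)
  show "strategy_profile 2 (\<lambda>_. {}) (\<lambda>_. {})"
    unfolding strategy_profile_def matching_def by auto
  show "(1::nat) \<in> {1..2}" by simp
  show "{1::nat,2} \<in> {{1,2},{1,3}}" by simp
  show "(1::nat) \<in> Vx 1" by (simp add: Vx_def)
  show "wx 1 {1,2} < (3::real)" by (simp add: wx_def)
  fix MI MI'
  assume a: "agent_choice 2 Vx {{1, 2}, {1, 3}} (\<lambda>_. {}) wx MI"
     and b: "agent_choice 2 Vx {{1, 2}, {1, 3}} (\<lambda>_. {}) (wx(1 := (wx 1)({1, 2} := 3))) MI'"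
  let ?w' = "wx(1 := (wx 1)({1, 2} := 3))"
  have i: "{1::nat,2} \<inter> Vx 1 \<noteq> {}" "{1::nat,2} \<inter> Vx 2 \<noteq> {}"
          "{1::nat,3} \<inter> Vx 1 \<noteq> {}" "{1::nat,3} \<inter> Vx 2 \<noteq> {}" by (auto simp: Vx_def)
  have w13: "wx 1 {1,3} = 0" "wx 2 {1,3} = 2" "wx 1 {1,2} = 1" "wx 2 {1,2} = 0"
    using d by (auto simp: wx_def)
  have A: "agent_weight 2 Vx wx {1,3} = 2" "agent_weight 2 Vx wx {1,2} = 1"
     "agent_weight 2 Vx ?w' {1,3} = 2" "agent_weight 2 Vx ?w' {1,2} = 3"
    unfolding aw using i w13 d by auto
  have "MI = {{1,3}}"
    using choice_cases[OF a] d A by auto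
  have "MI' = {{1,2}}"
    using choice_cases[OF b] d A by auto
  show "utility Vx wx 1 (\<lambda>_. {}) MI < utility Vx wx 1 (\<lambda>_. {}) MI'"
  proof -
    have "{e\<in>{{1::nat,3}}. e \<inter> Vx 1 \<noteq> {}} = {{1,3}}" "{e\<in>{{1::nat,2}}. e \<inter> Vx 1 \<noteq> {}} = {{1,2}}"
      using i by auto
    then show ?thesis unfolding utility_def using w13 \<open>MI = {{1,3}}\<close> \<open>MI' = {{1,2}}\<close> by simp
  qed
qed

end
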